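(* Let $\mathbf{X}\in\mathbb{R}^{n\times p}$ with $n>p$ have full column rank, let $\mathbf{D}\in\mathbb{R}^{m\times p}$ ($m<p$) have full row rank, let $\mathbf{E}\in\mathbb{R}^{(p-m)\times p}$ be such that $\tilde{\mathbf{D}}=[\mathbf{D}^\top,\mathbf{E}^\top]^\top$ is invertible, and write $\tilde{\mathbf{D}}^{-1}=[\mathbf{Z},\mathbf{F}]$ with $\mathbf{Z}\in\mathbb{R}^{p\times m}$, $\mathbf{F}\in\mathbb{R}^{p\times(p-m)}$. Let $\mathbf{M}=\mathbf{I}_n-\mathbf{X}\mathbf{F}[(\mathbf{X}\mathbf{F})^\top\mathbf{X}\mathbf{F}]^{-1}(\mathbf{X}\mathbf{F})^\top$ and $\mathbf{X}^*=\mathbf{M}\mathbf{X}\mathbf{Z}$. Then $\mathbf{X}^*$ has full column rank $m$, and hence $\boldsymbol\Sigma^*=\mathbf{X}^{*\top}\mathbf{X}^*$ is invertible. *)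

theory Defs
  imports "HOL-Analysis.Analysis"
begin

definition stack_rows :: "real^'p^'m::finite \<Rightarrow> real^'p^'k::finite \<Rightarrow> real^'p^('m + 'k)" where
  "stack_rows D E = (\<chi> i. case i of Inl a \<Rightarrow> D $ a | Inr b \<Rightarrow> E $ b)"

definition left_cols :: "real^('m::finite + 'k::finite)^'p \<Rightarrow> real^'m^'p" where
  "left_cols A = (\<chi> i j. A $ i $ Inl j)"

definition right_cols :: "real^('m::finite + 'k::finite)^'p \<Rightarrow> real^'k^'p" where
  "right_cols A = (\<chi> i j. A $ i $ Inr j)"

end

theory Submission
  imports Defs
begin

lemma gram_inv:
  fixes A :: "real^'m^'n"
  assumes "\<And>x. A *v x = 0 \<Longrightarrow> x = 0"
  shows "invertible (transpose A ** A)"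
proof -
  have "\<forall>x. (transpose A ** A) *v x = 0 \<longrightarrow> x = 0"
  proof (intro allI impI)
    fix x assume h: "(transpose A ** A) *v x = 0"
    have "inner (A *v x) (A *v x) = inner (x v* transpose A) (A *v x)"
      by (simp add: transpose_matrix_vector[symmetric])
    also have "\<dots> = inner x ((transpose A ** A) *v x)"
      by (simp only: dot_lmul_matrix matrix_vector_mul_assoc)
    also have "\<dots> = 0" using h by simp
    finally have "A *v x = 0" by simp
    then show "x = 0" using assms by blast
  qed
  then show ?thesis
    using invertible_left_inverse matrix_left_invertible_ker by blast
qed

lemma split_mult:
  fixes W :: "real^('m::finite + 'k::finite)^'p"
  shows "W *v x = left_cols W *v (\<chi> j. x $ Inl j) + right_cols W *v (\<chi> j. x $ Inr j)"
proof -
  have "\<And>i. (\<Sum>c\<in>UNIV. W $ i $ c * x $ c) =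
     (\<Sum>j\<in>UNIV. W $ i $ Inl j * x $ Inl j) + (\<Sum>j\<in>UNIV. W $ i $ Inr j * x $ Inr j)"
    by (subst UNIV_sum, subst sum.union_disjoint) (auto simp: sum.reindex)
  then show ?thesis
    by (simp add: vec_eq_iff matrix_vector_mult_def left_cols_def right_cols_def)
qed

theorem mainTheorem12:
  fixes X :: "real^'p^'n" and D :: "real^'p^'m" and E :: "real^'p^'k"
  assumes "CARD('p) < CARD('n)"
    and "rank X = CARD('p)"
    and "CARD('m) < CARD('p)"
    and "rank D = CARD('m)"
    and "CARD('k) = CARD('p) - CARD('m)"
    and "invertible (stack_rows D E)"
  shows "rank (let Z = left_cols (matrix_inv (stack_rows D E));
                   F = right_cols (matrix_inv (stack_rows D E));
                   M = mat 1 - (X ** F) ** matrix_inv (transpose (X ** F) ** (X ** F)) ** transpose (X ** F)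
               in M ** X ** Z) = CARD('m)
       \<and> invertible (let Z = left_cols (matrix_inv (stack_rows D E));
                   F = right_cols (matrix_inv (stack_rows D E));
                   M = mat 1 - (X ** F) ** matrix_inv (transpose (X ** F) ** (X ** F)) ** transpose (X ** F);
                   Xs = M ** X ** Z
               in transpose Xs ** Xs)"
proof -
  define S where "S = stack_rows D E"
  define W where "W = matrix_inv S"
  define Z where "Z = left_cols W"
  define F where "F = right_cols W"
  define B where "B = X ** F"
  define M where "M = mat 1 - B ** matrix_inv (transpose B ** B) ** transpose B"
  define Xs where "Xs = M ** X ** Z"
  have SW: "S ** W = mat 1 \<and> W ** S = mat 1"
    using assms(6) unfolding W_def matrix_inv_def invertible_def S_def by (rule someI_ex)
  have Winj: "x = 0" if "W *v x = 0" for x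
    by (metis SW matrix_vector_mul_assoc matrix_vector_mul_lid matrix_vector_mult_0_right that)
  have Xinj: "y = 0" if "X *v y = 0" for y
    using assms(2) full_rank_injective[of X] that
    by (metis inj_eq matrix_vector_mult_0_right)
  have key: "v = 0" if h: "Xs *v v = 0" for v
  proof -
    define y where "y = X *v (Z *v v)"
    define w where "w = matrix_inv (transpose B ** B) *v (transpose B *v y)"
    have "M *v y = 0" using h unfolding Xs_def y_def by (simp add: matrix_vector_mul_assoc matrix_mul_assoc)
    have bw: "B *v w = (B ** matrix_inv (transpose B ** B) ** transpose B) *v y"
      unfolding w_def by (simp only: matrix_vector_mul_assoc matrix_mul_assoc)
    have "M *v y = y - B *v w"
      unfolding M_def bw by (simp only: matrix_vector_mult_diff_rdistrib matrix_vector_mul_lid)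
    then have "y - B *v w = 0" using \<open>M *v y = 0\<close> by simp
    then have "X *v (Z *v v - F *v w) = 0"
      unfolding y_def B_def by (simp add: matrix_vector_mult_diff_distrib matrix_vector_mul_assoc)
    then have e: "Z *v v - F *v w = 0" using Xinj by blast
    define x :: "real^('m + 'k)" where "x = (\<chi> c. case c of Inl j \<Rightarrow> v $ j | Inr j \<Rightarrow> - (w $ j))"
    have "(\<chi> j. x $ Inl j) = v" "(\<chi> j. x $ Inr j) = - w" unfolding x_def by (auto simp: vec_eq_iff)
    moreover have "F *v - w = - (F *v w)" by (simp add: vec_eq_iff matrix_vector_mult_def sum_negf)
    ultimately have "W *v x = Z *v v - F *v w"
      unfolding Z_def F_def by (simp add: split_mult )
    then have "x = 0" using e Winj by simp
    then have "x $ Inl i = 0" for i by simp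
    then show "v = 0" unfolding x_def by (simp add: vec_eq_iff)
  qed
  have r: "rank Xs = CARD('m)"
    using key full_rank_injective[of Xs] matrix_left_invertible_ker[of Xs] matrix_left_invertible_injective[of Xs]
    by blast
  have i: "invertible (transpose Xs ** Xs)" using key gram_inv by blast
  show ?thesis using r i
    unfolding Let_def Xs_def M_def B_def Z_def F_def W_def S_def by simp
qed

end
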